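(* Let $X$ be an $S^{\ast}$-well-filtered space and $Y$ a retract of $X$, i.e. there are continuous maps $f:X\to Y$ and $g:Y\to X$ with $f\circ g=\mathrm{id}_Y$. Then $Y$ is $S^{\ast}$-well-filtered. In particular, if a product $\prod_{i\in I}X_i$ of $T_0$-spaces is $S^{\ast}$-well-filtered, then each $X_i$ is $S^{\ast}$-well-filtered.
   Context: All spaces are $T_0$. The specialization order of $X$ is given by $x\le y$ iff $x\in cl(\{y\})$; ${\uparrow}$ is taken with respect to it; a subset is saturated if it is an upper set in the specialization order. $K(X)$ denotes the set of all nonempty compact saturated subsets of $X$; a family in $K(X)$ is filtered if any two members contain a common member. $X$ is $S^{\ast}$-well-filtered if for every filtered family $\{K_i\mid i\in I\}\subseteq K(X)$, every $G\in K(X)$ and every nonempty open $U$, $\bigcap_{i\in I}K_i\cap G\subseteq U$ implies $K_i\cap G\subseteq U$ for some $i$. *)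

theory Defs
  imports "HOL-Analysis.Analysis"
begin

definition spec_le :: "'a topology \<Rightarrow> 'a \<Rightarrow> 'a \<Rightarrow> bool" where
  "spec_le X x y \<longleftrightarrow> x \<in> topspace X \<and> y \<in> topspace X \<and> x \<in> X closure_of {y}"

definition saturated_in :: "'a topology \<Rightarrow> 'a set \<Rightarrow> bool" where
  "saturated_in X A \<longleftrightarrow> A \<subseteq> topspace X \<and>
     (\<forall>x\<in>A. \<forall>y\<in>topspace X. spec_le X x y \<longrightarrow> y \<in> A)"

definition KX :: "'a topology \<Rightarrow> 'a set set" where
  "KX X = {K. K \<noteq> {} \<and> compactin X K \<and> saturated_in X K}"

definition filtered_K :: "'a topology \<Rightarrow> 'a set set \<Rightarrow> bool" where
  "filtered_K X \<K> \<longleftrightarrow> \<K> \<noteq> {} \<and> \<K> \<subseteq> KX X \<and>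
     (\<forall>K1\<in>\<K>. \<forall>K2\<in>\<K>. \<exists>K3\<in>\<K>. K3 \<subseteq> K1 \<inter> K2)"

definition S_star_well_filtered :: "'a topology \<Rightarrow> bool" where
  "S_star_well_filtered X \<longleftrightarrow>
     (\<forall>\<K> G U. filtered_K X \<K> \<and> G \<in> KX X \<and> openin X U \<and> U \<noteq> {} \<and>
        \<Inter>\<K> \<inter> G \<subseteq> U \<longrightarrow> (\<exists>K\<in>\<K>. K \<inter> G \<subseteq> U))"

end

theory Submission
  imports Defs
begin

lemma open_upper:
  assumes "openin X V" "x \<in> V" "spec_le X x y" shows "y \<in> V"
  using assms unfolding spec_le_def in_closure_of by auto

lemma spec_refl: "x \<in> topspace X \<Longrightarrow> spec_le X x x"
  unfolding spec_le_def using closure_of_subset[of "{x}" X] by auto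

lemma spec_trans:
  assumes "spec_le X x y" "spec_le X y z" shows "spec_le X x z"
proof -
  have "X closure_of {y} \<subseteq> X closure_of {z}"
    using assms(2) unfolding spec_le_def
    by (metis closure_of_minimal closedin_closure_of empty_subsetI insert_subset)
  thus ?thesis using assms unfolding spec_le_def by auto
qed

lemma spec_mono:
  assumes "continuous_map X Y f" "spec_le X x y" shows "spec_le Y (f x) (f y)"
proof -
  have "f x \<in> f ` (X closure_of {y})" using assms(2) unfolding spec_le_def by blast
  hence "f x \<in> Y closure_of {f y}"
    using continuous_map_image_closure_subset[OF assms(1), of "{y}"] by auto
  moreover have "f x \<in> topspace Y" "f y \<in> topspace Y"
    using assms unfolding spec_le_def continuous_map_def by blast+
  ultimately show ?thesis unfolding spec_le_def by blast
qed

definition up :: "'a topology \<Rightarrow> 'a set \<Rightarrow> 'a set" where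
  "up X A = {y \<in> topspace X. \<exists>a\<in>A. spec_le X a y}"

lemma up_sat: "saturated_in X (up X A)"
  unfolding saturated_in_def up_def
proof (intro conjI ballI impI)
  fix x y assume x: "x \<in> {y \<in> topspace X. \<exists>a\<in>A. spec_le X a y}"
    and y: "y \<in> topspace X" and le: "spec_le X x y"
  from x obtain a where a: "a \<in> A" "spec_le X a x" by blast
  have "spec_le X a y" using spec_trans[OF a(2) le] .
  with a y show "y \<in> {y \<in> topspace X. \<exists>a\<in>A. spec_le X a y}" by blast
qed auto

lemma up_sub: "A \<subseteq> topspace X \<Longrightarrow> A \<subseteq> up X A"
  unfolding up_def
proof
  fix x assume "A \<subseteq> topspace X" "x \<in> A"
  moreover then have "spec_le X x x" using spec_refl[of x X] by blast
  ultimately show "x \<in> {y \<in> topspace X. \<exists>a\<in>A. spec_le X a y}" by blast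
qed

lemma up_compact:
  assumes "compactin X A" shows "compactin X (up X A)"
  unfolding compactin_def
proof (intro conjI allI impI)
  show "up X A \<subseteq> topspace X" unfolding up_def by auto
  fix \<U> assume U: "(\<forall>U\<in>\<U>. openin X U) \<and> up X A \<subseteq> \<Union>\<U>"
  have "A \<subseteq> up X A" using up_sub[OF compactin_subset_topspace[OF assms]] .
  with U assms obtain \<F> where F: "finite \<F>" "\<F> \<subseteq> \<U>" "A \<subseteq> \<Union>\<F>"
    unfolding compactin_def by (metis subset_trans)
  have "up X A \<subseteq> \<Union>\<F>"
  proof
    fix y assume "y \<in> up X A"
    then obtain a where "a \<in> A" "spec_le X a y" unfolding up_def by auto
    then obtain V where "V \<in> \<F>" "a \<in> V" using F by auto
    moreover have "openin X V" using U F \<open>V \<in> \<F>\<close> by auto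
    ultimately show "y \<in> \<Union>\<F>" using open_upper[OF _ _ \<open>spec_le X a y\<close>] by blast
  qed
  thus "\<exists>\<F>. finite \<F> \<and> \<F> \<subseteq> \<U> \<and> up X A \<subseteq> \<Union>\<F>" using F by blast
qed

lemma retract_lemma:
  assumes W: "S_star_well_filtered X" and cf: "continuous_map X Y f"
    and cg: "continuous_map Y X g" and fg: "\<forall>y\<in>topspace Y. f (g y) = y"
  shows "S_star_well_filtered Y"
  unfolding S_star_well_filtered_def
proof (intro allI impI)
  fix \<K> G U
  assume H: "filtered_K Y \<K> \<and> G \<in> KX Y \<and> openin Y U \<and> U \<noteq> {} \<and> \<Inter>\<K> \<inter> G \<subseteq> U"
  define h where "h K = up X (g ` K)" for K
  have KK: "h K \<in> KX X" if "K \<in> KX Y" for K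
  proof -
    have KY: "K \<subseteq> topspace Y" "K \<noteq> {}" "compactin Y K" using that by (auto simp: KX_def compactin_subset_topspace)
    moreover have gK: "g ` K \<subseteq> topspace X" using cg KY(1) by (auto simp: continuous_map_def)
    ultimately show "h K \<in> KX X" unfolding KX_def h_def
      using up_sat[of X "g ` K"] up_compact[OF image_compactin[OF KY(3) cg]]
        up_sub[OF gK] by blast
  qed
  have backK: "f x \<in> K" if "K \<in> KX Y" "x \<in> h K" for K x
  proof -
    from that obtain k where k: "k \<in> K" "spec_le X (g k) x" "x \<in> topspace X"
      unfolding h_def up_def by auto
    have kY: "k \<in> topspace Y" using that k by (auto simp: KX_def saturated_in_def)
    have "spec_le Y k (f x)" using spec_mono[OF cf k(2)] fg kY by simp
    moreover have "saturated_in Y K" using that by (auto simp: KX_def)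
    ultimately show ?thesis using k unfolding saturated_in_def spec_le_def by blast
  qed
  have hmono: "h A \<subseteq> h B" if "A \<subseteq> B" for A B
    using that unfolding h_def up_def by blast
  have F: "filtered_K X (h ` \<K>)"
    using H unfolding filtered_K_def
  proof (intro conjI)
    show "h ` \<K> \<noteq> {}" using H by (auto simp: filtered_K_def)
    show "h ` \<K> \<subseteq> KX X" using H KK by (auto simp: filtered_K_def)
    show "\<forall>K1\<in>h ` \<K>. \<forall>K2\<in>h ` \<K>. \<exists>K3\<in>h ` \<K>. K3 \<subseteq> K1 \<inter> K2"
    proof clarsimp
      fix K1 K2 assume "K1 \<in> \<K>" "K2 \<in> \<K>"
      then obtain K3 where "K3 \<in> \<K>" "K3 \<subseteq> K1 \<inter> K2" using H unfolding filtered_K_def by meson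
      thus "\<exists>K3\<in>\<K>. h K3 \<subseteq> h K1 \<and> h K3 \<subseteq> h K2" using hmono by blast
    qed
  qed
  have GX: "h G \<in> KX X" using KK H by blast
  have UX: "openin X {x \<in> topspace X. f x \<in> U}" using cf H openin_continuous_map_preimage by blast
  obtain u where u: "u \<in> U" using H by auto
  have uY: "u \<in> topspace Y" using u H openin_subset by blast
  have "g u \<in> {x \<in> topspace X. f x \<in> U}" using u uY fg cg by (auto simp: continuous_map_def)
  hence UX2: "{x \<in> topspace X. f x \<in> U} \<noteq> {}" by blast
  have KsubY: "\<K> \<subseteq> KX Y" using H by (auto simp: filtered_K_def)
  have inter: "\<Inter>(h ` \<K>) \<inter> h G \<subseteq> {x \<in> topspace X. f x \<in> U}"
  proof
    fix x assume x: "x \<in> \<Inter>(h ` \<K>) \<inter> h G"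
    have "f x \<in> \<Inter>\<K>" using x backK KsubY by blast
    moreover have "f x \<in> G" using x backK H by blast
    moreover have "x \<in> topspace X" using x unfolding h_def up_def by auto
    ultimately show "x \<in> {x \<in> topspace X. f x \<in> U}" using H by blast
  qed
  obtain K' where K': "K' \<in> h ` \<K>" "K' \<inter> h G \<subseteq> {x \<in> topspace X. f x \<in> U}"
    using W[unfolded S_star_well_filtered_def, rule_format, of "h ` \<K>" "h G" "{x \<in> topspace X. f x \<in> U}"]
      F GX UX UX2 inter by blast
  then obtain K where K: "K \<in> \<K>" "h K \<inter> h G \<subseteq> {x \<in> topspace X. f x \<in> U}" by blast
  have "K \<inter> G \<subseteq> U"
  proof
    fix y assume y: "y \<in> K \<inter> G"
    have yY: "y \<in> topspace Y" using y H by (auto simp: KX_def saturated_in_def)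
    have gy: "g y \<in> topspace X" using yY cg by (auto simp: continuous_map_def)
    have "g y \<in> h K \<inter> h G" using y gy spec_refl[OF gy] unfolding h_def up_def by blast
    thus "y \<in> U" using K fg yY by auto
  qed
  thus "\<exists>K\<in>\<K>. K \<inter> G \<subseteq> U" using K by blast
qed

theorem mainTheorem16:
  shows "(\<forall>(X :: 'a topology) (Y :: 'b topology) f g.
            t0_space X \<and> t0_space Y \<and> S_star_well_filtered X \<and>
            continuous_map X Y f \<and> continuous_map Y X g \<and>
            (\<forall>y\<in>topspace Y. f (g y) = y)
            \<longrightarrow> S_star_well_filtered Y)
       \<and> (\<forall>(I :: 'i set) (Xs :: 'i \<Rightarrow> 'c topology).
            (\<forall>i\<in>I. t0_space (Xs i)) \<and> topspace (product_topology Xs I) \<noteq> {} \<and>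
            S_star_well_filtered (product_topology Xs I)
            \<longrightarrow> (\<forall>i\<in>I. S_star_well_filtered (Xs i)))"
proof (intro conjI allI impI ballI)
  fix X :: "'a topology" and Y :: "'b topology" and f g
  assume "t0_space X \<and> t0_space Y \<and> S_star_well_filtered X \<and>
            continuous_map X Y f \<and> continuous_map Y X g \<and>
            (\<forall>y\<in>topspace Y. f (g y) = y)"
  thus "S_star_well_filtered Y" using retract_lemma by blast
next
  fix I :: "'i set" and Xs :: "'i \<Rightarrow> 'c topology" and i
  assume H: "(\<forall>i\<in>I. t0_space (Xs i)) \<and> topspace (product_topology Xs I) \<noteq> {} \<and>
            S_star_well_filtered (product_topology Xs I)" and i: "i \<in> I"
  then obtain z where z: "z \<in> topspace (product_topology Xs I)" by blast
  have cf: "continuous_map (product_topology Xs I) (Xs i) (\<lambda>x. x i)"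
    using i by (rule continuous_map_product_projection)
  have cg: "continuous_map (Xs i) (product_topology Xs I) (\<lambda>y. z(i := y))"
    unfolding continuous_map_componentwise
  proof (intro conjI ballI)
    show "(\<lambda>y. z(i := y)) ` topspace (Xs i) \<subseteq> extensional I"
      using z i by (auto simp: extensional_def)
    fix k assume k: "k \<in> I"
    show "continuous_map (Xs i) (Xs k) (\<lambda>x. (z(i := x)) k)"
    proof (cases "k = i")
      case True thus ?thesis by simp
    next
      case False
      have "z k \<in> topspace (Xs k)" using z k by auto
      thus ?thesis using False by simp
    qed
  qed
  show "S_star_well_filtered (Xs i)"
    using retract_lemma[OF _ cf cg] H by simp
qed

end
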